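(* Let $G=(V,E)$ be a graph with $m\ge 1$ edges, let $d_v := \deg(v)/(2m)$ for $v\in V$, and let $p^\flat$ be the in-degree distribution of any biased orientation of $G$. Then $$\mathrm{OPT}(G) \ \ge\ \sum_{v\in V} -p^\flat_v \log\frac{\deg(v)}{m} \ =\ H(p^\flat) + D(p^\flat\parallel d) - 1,$$ where $D(p\parallel q) := \sum_{i} p_i\log(p_i/q_i)$ is the relative entropy.
   Context: All graphs are finite, undirected and loopless, but multiple edges are allowed. For an orientation $\vec G$ of $G$, the in-degree distribution is $p_v := \rho_{\vec G}(v)/m$, where $\rho_{\vec G}(v)$ is the in-degree of $v$. Entropy: $H(p) := \sum_{v} -p_v\log p_v$, $\log$ base $2$, $-0\log 0:=0$ (and in the relative entropy terms with $p_i=0$ are $0$). $\mathrm{OPT}(G)$ is the minimum entropy of the in-degree distribution of an orientation of $G$. An orientation is biased if each edge $vw$ with $\deg(v)>\deg(w)$ is oriented toward $v$. *)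

theory Defs
  imports Complex_Main
begin

text \<open>A finite loopless multigraph: vertex set V, edge set E (edge identifiers,
so parallel edges are allowed), and ends e = set of the two endpoints of e.\<close>
definition multigraph :: "'v set \<Rightarrow> 'e set \<Rightarrow> ('e \<Rightarrow> 'v set) \<Rightarrow> bool" where
  "multigraph V E ends \<longleftrightarrow> finite V \<and> finite E \<and>
     (\<forall>e\<in>E. ends e \<subseteq> V \<and> card (ends e) = 2)"

definition degree :: "'e set \<Rightarrow> ('e \<Rightarrow> 'v set) \<Rightarrow> 'v \<Rightarrow> nat" where
  "degree E ends v = card {e\<in>E. v \<in> ends e}"

text \<open>An orientation is given by the head of every edge (the endpoint it points to).\<close>
definition orientation :: "'e set \<Rightarrow> ('e \<Rightarrow> 'v set) \<Rightarrow> ('e \<Rightarrow> 'v) \<Rightarrow> bool" where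
  "orientation E ends h \<longleftrightarrow> (\<forall>e\<in>E. h e \<in> ends e)"

definition indeg :: "'e set \<Rightarrow> ('e \<Rightarrow> 'v) \<Rightarrow> 'v \<Rightarrow> nat" where
  "indeg E h v = card {e\<in>E. h e = v}"

definition indeg_dist :: "'e set \<Rightarrow> ('e \<Rightarrow> 'v) \<Rightarrow> 'v \<Rightarrow> real" where
  "indeg_dist E h v = real (indeg E h v) / real (card E)"

text \<open>Entropy (base 2). Note log 2 0 = 0 in Isabelle, so 0 log 0 = 0 automatically.\<close>
definition entropy :: "'v set \<Rightarrow> ('v \<Rightarrow> real) \<Rightarrow> real" where
  "entropy V p = (\<Sum>v\<in>V. - p v * log 2 (p v))"

text \<open>Relative entropy; terms with p_i = 0 vanish since 0 * x = 0.\<close>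
definition rel_entropy :: "'v set \<Rightarrow> ('v \<Rightarrow> real) \<Rightarrow> ('v \<Rightarrow> real) \<Rightarrow> real" where
  "rel_entropy V p q = (\<Sum>v\<in>V. p v * log 2 (p v / q v))"

definition OPT :: "'v set \<Rightarrow> 'e set \<Rightarrow> ('e \<Rightarrow> 'v set) \<Rightarrow> real" where
  "OPT V E ends = Min ((\<lambda>h. entropy V (indeg_dist E h)) ` {h. orientation E ends h})"

definition biased :: "'e set \<Rightarrow> ('e \<Rightarrow> 'v set) \<Rightarrow> ('e \<Rightarrow> 'v) \<Rightarrow> bool" where
  "biased E ends h \<longleftrightarrow> orientation E ends h \<and>
     (\<forall>e\<in>E. \<forall>v\<in>ends e. \<forall>w\<in>ends e. degree E ends v > degree E ends w \<longrightarrow> h e = v)"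

end

theory Submission
  imports Defs "HOL-Library.FuncSet"
begin

lemma sum_indeg:
  assumes "finite V" "finite E" "h ` E \<subseteq> V"
  shows "(\<Sum>v\<in>V. real (indeg E h v) * f v) = (\<Sum>e\<in>E. f (h e))"
proof -
  have "(\<Sum>e\<in>E. f (h e)) = (\<Sum>v\<in>V. \<Sum>e\<in>{e. e \<in> E \<and> h e = v}. f (h e))"
    using sum.group[OF assms(2,1,3), of "\<lambda>e. f (h e)"] by simp
  also have "\<dots> = (\<Sum>v\<in>V. \<Sum>e\<in>{e. e \<in> E \<and> h e = v}. f v)"
    by (intro sum.cong) auto
  also have "\<dots> = (\<Sum>v\<in>V. real (indeg E h v) * f v)"
    by (simp add: indeg_def)
  finally show ?thesis by simp
qed

lemma indeg_le_degree:
  assumes "finite E" "orientation E ends h"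
  shows "indeg E h v \<le> degree E ends v"
  unfolding indeg_def degree_def
  using assms by (intro card_mono) (auto simp: orientation_def)

lemma degree_head_pos:
  assumes "finite E" "orientation E ends h" "e \<in> E"
  shows "degree E ends (h e) \<ge> 1"
proof -
  have "e \<in> {e'\<in>E. h e \<in> ends e'}" using assms by (auto simp: orientation_def)
  then have "{e'\<in>E. h e \<in> ends e'} \<noteq> {}" by blast
  then show ?thesis unfolding degree_def using assms(1)
    by (metis (no_types, lifting) One_nat_def Suc_leI card_gt_0_iff finite_subset mem_Collect_eq subsetI)
qed

theorem mainTheorem4:
  fixes V :: "'v set" and E :: "'e set" and ends :: "'e \<Rightarrow> 'v set" and h :: "'e \<Rightarrow> 'v"
  assumes "multigraph V E ends"
    and "card E \<ge> 1"
    and "biased E ends h"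
  shows "OPT V E ends \<ge>
           (\<Sum>v\<in>V. - indeg_dist E h v * log 2 (real (degree E ends v) / real (card E)))
       \<and> (\<Sum>v\<in>V. - indeg_dist E h v * log 2 (real (degree E ends v) / real (card E)))
           = entropy V (indeg_dist E h)
             + rel_entropy V (indeg_dist E h) (\<lambda>v. real (degree E ends v) / (2 * real (card E))) - 1"
proof -
  have fV: "finite V" and fE: "finite E" and endsV: "\<And>e. e \<in> E \<Longrightarrow> ends e \<subseteq> V"
    using assms(1) by (auto simp: multigraph_def)
  have or: "orientation E ends h" using assms(3) by (simp add: biased_def)
  define m where "m = real (card E)"
  have mpos: "m > 0" using assms(2) by (simp add: m_def)
  define deg where "deg = degree E ends"
  define g where "g = (\<lambda>v. - log 2 (real (deg v) / m) / m)"
  have hV: "k ` E \<subseteq> V" if "orientation E ends k" for k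
    using that endsV by (auto simp: orientation_def)
  have bound_edges: "(\<Sum>v\<in>V. - indeg_dist E k v * log 2 (real (deg v) / m)) = (\<Sum>e\<in>E. g (k e))"
    if "orientation E ends k" for k
  proof -
    have "(\<Sum>v\<in>V. - indeg_dist E k v * log 2 (real (deg v) / m)) = (\<Sum>v\<in>V. real (indeg E k v) * g v)"
      by (intro sum.cong) (auto simp: indeg_dist_def g_def m_def)
    also have "\<dots> = (\<Sum>e\<in>E. g (k e))" using sum_indeg[OF fV fE hV[OF that]] .
    finally show ?thesis .
  qed
  have ent_ge: "entropy V (indeg_dist E k) \<ge> (\<Sum>v\<in>V. - indeg_dist E k v * log 2 (real (deg v) / m))"
    if ok: "orientation E ends k" for k
    unfolding entropy_def
  proof (intro sum_mono)
    fix v assume "v \<in> V"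
    show "- indeg_dist E k v * log 2 (real (deg v) / m) \<le> - indeg_dist E k v * log 2 (indeg_dist E k v)"
    proof (cases "indeg E k v = 0")
      case True then show ?thesis by (simp add: indeg_dist_def)
    next
      case False
      have le: "indeg E k v \<le> deg v" using indeg_le_degree[OF fE ok] by (simp add: deg_def)
      have qpos: "indeg_dist E k v > 0" using False mpos by (simp add: indeg_dist_def m_def)
      have "indeg_dist E k v \<le> real (deg v) / m" using le mpos
        by (simp add: indeg_dist_def m_def divide_right_mono)
      then have "log 2 (indeg_dist E k v) \<le> log 2 (real (deg v) / m)"
        using qpos by (intro log_mono) auto
      then show ?thesis using qpos by (simp add: mult_left_mono)
    qed
  qed
  have edge_ge: "(\<Sum>e\<in>E. g (k e)) \<ge> (\<Sum>e\<in>E. g (h e))" if ok: "orientation E ends k" for k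
  proof (intro sum_mono)
    fix e assume e: "e \<in> E"
    have "\<not> deg (k e) > deg (h e)"
    proof
      assume lt: "deg (k e) > deg (h e)"
      have "k e \<in> ends e" "h e \<in> ends e" using e ok or by (auto simp: orientation_def)
      moreover have H: "\<And>v w. v \<in> ends e \<Longrightarrow> w \<in> ends e \<Longrightarrow> deg w < deg v \<Longrightarrow> h e = v"
        using assms(3) e unfolding biased_def deg_def by auto
      ultimately have "h e = k e" using lt by blast
      then show False using lt by simp
    qed
    then have dle: "deg (k e) \<le> deg (h e)" by simp
    have d1: "deg (k e) \<ge> 1" using degree_head_pos[OF fE ok e] by (simp add: deg_def)
    have q1: "real (deg (k e)) / m \<le> real (deg (h e)) / m"
      using dle mpos by (intro divide_right_mono) auto
    have q2: "0 < real (deg (k e)) / m" using d1 mpos by simp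
    have "log 2 (real (deg (k e)) / m) \<le> log 2 (real (deg (h e)) / m)"
      by (rule log_mono[OF _ q2 q1]) simp
    then have "- log 2 (real (deg (h e)) / m) \<le> - log 2 (real (deg (k e)) / m)" by linarith
    then show "g (h e) \<le> g (k e)" unfolding g_def using mpos by (intro divide_right_mono) auto
  qed
  define B where "B = (\<Sum>v\<in>V. - indeg_dist E h v * log 2 (real (deg v) / m))"
  have all_ge: "B \<le> entropy V (indeg_dist E k)" if ok: "orientation E ends k" for k
    using ent_ge[OF ok] edge_ge[OF ok] bound_edges[OF ok] bound_edges[OF or]
    unfolding B_def by linarith
  let ?F = "\<lambda>k. entropy V (indeg_dist E k)"
  have sub: "?F ` {k. orientation E ends k} \<subseteq> ?F ` (E \<rightarrow>\<^sub>E V)"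
  proof
    fix x assume "x \<in> ?F ` {k. orientation E ends k}"
    then obtain k where ok: "orientation E ends k" and x: "x = ?F k" by blast
    have "restrict k E \<in> E \<rightarrow>\<^sub>E V" using hV[OF ok] by auto
    moreover have "indeg_dist E (restrict k E) = indeg_dist E k"
    proof
      fix v
      have "{e\<in>E. restrict k E e = v} = {e\<in>E. k e = v}" by auto
      then show "indeg_dist E (restrict k E) v = indeg_dist E k v" by (simp add: indeg_dist_def indeg_def)
    qed
    ultimately show "x \<in> ?F ` (E \<rightarrow>\<^sub>E V)" using x by (metis image_eqI)
  qed
  have fin: "finite (?F ` {k. orientation E ends k})"
  proof (rule finite_subset[OF sub])
    have "finite (E \<rightarrow>\<^sub>E V)" using fE fV by (intro finite_PiE) auto
    then show "finite (?F ` (E \<rightarrow>\<^sub>E V))" by (rule finite_imageI)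
  qed
  have ne: "?F ` {k. orientation E ends k} \<noteq> {}" using or by auto
  have part1: "B \<le> OPT V E ends"
    unfolding OPT_def using fin ne all_ge by (subst Min_ge_iff) auto
  have sum1: "(\<Sum>v\<in>V. indeg_dist E h v) = 1"
  proof -
    have "(\<Sum>v\<in>V. real (indeg E h v) * (1/m)) = (\<Sum>e\<in>E. 1/m)" using sum_indeg[OF fV fE hV[OF or]] .
    also have "\<dots> = 1" using mpos by (simp add: m_def)
    finally show ?thesis by (simp add: indeg_dist_def m_def)
  qed
  have part2: "B = entropy V (indeg_dist E h) + rel_entropy V (indeg_dist E h) (\<lambda>v. real (deg v) / (2 * m)) - 1"
  proof -
    have "entropy V (indeg_dist E h) + rel_entropy V (indeg_dist E h) (\<lambda>v. real (deg v) / (2 * m))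
        = (\<Sum>v\<in>V. - indeg_dist E h v * log 2 (indeg_dist E h v) + indeg_dist E h v * log 2 (indeg_dist E h v / (real (deg v) / (2 * m))))"
      unfolding entropy_def rel_entropy_def by (rule sum.distrib[symmetric])
    also have "\<dots> = (\<Sum>v\<in>V. - indeg_dist E h v * log 2 (real (deg v) / m) + indeg_dist E h v)"
    proof (intro sum.cong refl)
      fix v assume "v \<in> V"
      show "- indeg_dist E h v * log 2 (indeg_dist E h v) + indeg_dist E h v * log 2 (indeg_dist E h v / (real (deg v) / (2 * m)))
          = - indeg_dist E h v * log 2 (real (deg v) / m) + indeg_dist E h v"
      proof (cases "indeg E h v = 0")
        case True then show ?thesis by (simp add: indeg_dist_def)
      next
        case False
        have le: "indeg E h v \<le> deg v" using indeg_le_degree[OF fE or] by (simp add: deg_def)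
        have qpos: "indeg_dist E h v > 0" using False mpos by (simp add: indeg_dist_def m_def)
        have dpos: "real (deg v) > 0" using le False by simp
        have "log 2 (indeg_dist E h v / (real (deg v) / (2 * m))) = log 2 (indeg_dist E h v) - log 2 (real (deg v) / m) + 1"
        proof -
          have "indeg_dist E h v / (real (deg v) / (2 * m)) = 2 * (indeg_dist E h v / (real (deg v) / m))"
            using mpos dpos by (simp add: field_simps)
          moreover have "indeg_dist E h v / (real (deg v) / m) \<noteq> 0" using qpos dpos mpos by simp
          ultimately have "log 2 (indeg_dist E h v / (real (deg v) / (2 * m))) = log 2 2 + log 2 (indeg_dist E h v / (real (deg v) / m))"
            by (simp only: log_mult) simp
          also have "\<dots> = 1 + log 2 (indeg_dist E h v) - log 2 (real (deg v) / m)"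
            using qpos dpos mpos by (simp add: log_divide log_mult)
          finally show ?thesis by simp
        qed
        note L = this
        have alg: "\<And>p a b c. (c::real) = a - b + 1 \<Longrightarrow> - p * a + p * c = - p * b + p"
          by (simp add: ring_distribs)
        show ?thesis by (rule alg[OF L])
      qed
    qed
    also have "\<dots> = B + 1" unfolding B_def using sum1 by (simp only: sum.distrib)
    finally show ?thesis by simp
  qed
  show ?thesis using part1 part2 unfolding B_def deg_def m_def by simp
qed

end
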